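(* Let $G$ be a finite undirected weighted graph on $V=\{1,\dots,n\}$ with symmetric nonnegative weights $w(ij)=w(ji)\ge0$, degrees $d_i=\sum_j w(ij)$, $\mathrm{vol}(V)=\sum_i d_i>0$, and positive vertex measure $\mu_1,\dots,\mu_n>0$. For $x\in\mathbb R^n$ put $$\langle x,\mathcal M(x)\rangle_\mu=\frac12\sum_{i,j=1}^n\Big(\frac{d_id_j}{\mathrm{vol}(V)}-w(ij)\Big)|x_i-x_j|,$$ and for $x\neq0$ let $r^*_{\mathcal M}(x)=\langle x,\mathcal M(x)\rangle_\mu/\|x\|_\infty$, and $\lambda_1(r^*_{\mathcal M})=\max_{x\ne0}r^*_{\mathcal M}(x)$. Then for every $A\subseteq V$, $r^*_{\mathcal M}(\mathbb 1_A-\mathbb 1_{\overline A})=q(A)\,\mu(V)$, and $$q(G)=\max_{A\subseteq V}q(A)=\lambda_1(r^*_{\mathcal M})/\mu(V).$$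
   Context: $\|x\|_\infty=\max_i|x_i|$; $\mathbb 1_A$ is the indicator vector of $A$, $\overline A=V\setminus A$, $\mu(A)=\sum_{i\in A}\mu_i$, $\mathrm{vol}(A)=\sum_{i\in A}d_i$. Modularity: $Q(A)=\sum_{i,j\in A}w(ij)-\mathrm{vol}(A)^2/\mathrm{vol}(V)$, and $q(A)=\frac{2}{\mu(V)}Q(A)$. The quantity $\langle x,\mathcal M(x)\rangle_\mu$ is the paper's notation for the pairing with the nonlinear modularity operator; here it is simply defined by the displayed formula. *)

theory Defs
  imports Complex_Main "HOL-Library.Indicator_Function"
begin

text \<open>Vertex set V is the (finite) type 'v, i.e. V = UNIV. Weights w i j, vertex measure mu i.\<close>

definition deg :: "('v::finite \<Rightarrow> 'v \<Rightarrow> real) \<Rightarrow> 'v \<Rightarrow> real" where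
  "deg w i = (\<Sum>j\<in>UNIV. w i j)"

definition vol :: "('v::finite \<Rightarrow> 'v \<Rightarrow> real) \<Rightarrow> 'v set \<Rightarrow> real" where
  "vol w A = (\<Sum>i\<in>A. deg w i)"

definition meas :: "('v::finite \<Rightarrow> real) \<Rightarrow> 'v set \<Rightarrow> real" where
  "meas mu A = (\<Sum>i\<in>A. mu i)"

definition Qmod :: "('v::finite \<Rightarrow> 'v \<Rightarrow> real) \<Rightarrow> 'v set \<Rightarrow> real" where
  "Qmod w A = (\<Sum>i\<in>A. \<Sum>j\<in>A. w i j) - (vol w A)\<^sup>2 / vol w UNIV"

definition qmod :: "('v::finite \<Rightarrow> 'v \<Rightarrow> real) \<Rightarrow> ('v \<Rightarrow> real) \<Rightarrow> 'v set \<Rightarrow> real" where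
  "qmod w mu A = 2 / meas mu UNIV * Qmod w A"

definition qG :: "('v::finite \<Rightarrow> 'v \<Rightarrow> real) \<Rightarrow> ('v \<Rightarrow> real) \<Rightarrow> real" where
  "qG w mu = Max {qmod w mu A | A. A \<subseteq> UNIV}"

definition modpair :: "('v::finite \<Rightarrow> 'v \<Rightarrow> real) \<Rightarrow> ('v \<Rightarrow> real) \<Rightarrow> real" where
  "modpair w x = 1/2 * (\<Sum>i\<in>UNIV. \<Sum>j\<in>UNIV.
       (deg w i * deg w j / vol w UNIV - w i j) * \<bar>x i - x j\<bar>)"

definition linf :: "('v::finite \<Rightarrow> real) \<Rightarrow> real" where
  "linf x = Max (range (\<lambda>i. \<bar>x i\<bar>))"

definition rstar :: "('v::finite \<Rightarrow> 'v \<Rightarrow> real) \<Rightarrow> ('v \<Rightarrow> real) \<Rightarrow> real" where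
  "rstar w x = modpair w x / linf x"

text \<open>lambda_1(r*_M) = sup over x \<noteq> 0 of r*_M(x); the theorem also asserts it is attained (a max).\<close>
definition lambda1 :: "('v::finite \<Rightarrow> 'v \<Rightarrow> real) \<Rightarrow> real" where
  "lambda1 w = Sup (rstar w ` {x. x \<noteq> (\<lambda>_. 0)})"

end

theory Submission
  imports Defs
begin

lemma sum_split_compl:
  "(\<Sum>i\<in>UNIV. (g::'a::finite\<Rightarrow>real) i) = (\<Sum>i\<in>S. g i) + (\<Sum>i\<in>-S. g i)"
  by (metis Compl_partition2 add.commute finite sum.union_disjoint disjoint_eq_subset_Compl subset_refl)

definition Kmat :: "('v::finite \<Rightarrow> 'v \<Rightarrow> real) \<Rightarrow> 'v \<Rightarrow> 'v \<Rightarrow> real" where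
  "Kmat w i j = deg w i * deg w j / vol w UNIV - w i j"

definition cutK :: "('v::finite \<Rightarrow> 'v \<Rightarrow> real) \<Rightarrow> 'v set \<Rightarrow> real" where
  "cutK K S = (\<Sum>i\<in>S. \<Sum>j\<in>-S. K i j)"

definition fK :: "('v::finite \<Rightarrow> 'v \<Rightarrow> real) \<Rightarrow> ('v \<Rightarrow> real) \<Rightarrow> real" where
  "fK K x = 1/2 * (\<Sum>i\<in>UNIV. \<Sum>j\<in>UNIV. K i j * \<bar>x i - x j\<bar>)"

lemma xor_sum:
  fixes K :: "'v::finite \<Rightarrow> 'v \<Rightarrow> real"
  assumes symK: "\<And>i j. K i j = K j i"
  shows "(\<Sum>i\<in>UNIV. \<Sum>j\<in>UNIV. K i j * (if (i\<in>S) = (j\<in>S) then 0 else 1)) = 2 * cutK K S"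
proof -
  let ?g = "\<lambda>i j. K i j * (if (i\<in>S) = (j\<in>S) then 0 else 1)"
  have A: "(\<Sum>i\<in>S. \<Sum>j\<in>UNIV. ?g i j) = cutK K S"
    unfolding cutK_def
  proof (rule sum.cong[OF refl])
    fix i assume "i \<in> S"
    then show "(\<Sum>j\<in>UNIV. ?g i j) = (\<Sum>j\<in>-S. K i j)"
      by (subst sum_split_compl[of _ S]) simp
  qed
  have B: "(\<Sum>i\<in>-S. \<Sum>j\<in>UNIV. ?g i j) = (\<Sum>i\<in>-S. \<Sum>j\<in>S. K i j)"
  proof (rule sum.cong[OF refl])
    fix i assume "i \<in> -S"
    then show "(\<Sum>j\<in>UNIV. ?g i j) = (\<Sum>j\<in>S. K i j)"
      by (subst sum_split_compl[of _ S]) simp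
  qed
  have C: "(\<Sum>i\<in>-S. \<Sum>j\<in>S. K i j) = cutK K S"
    unfolding cutK_def by (subst sum.swap) (simp add: symK)
  show ?thesis
    using sum_split_compl[of "\<lambda>i. \<Sum>j\<in>UNIV. ?g i j" S] A B C by simp
qed

lemma cutK_Q:
  fixes w :: "'v::finite \<Rightarrow> 'v \<Rightarrow> real"
  assumes "vol w UNIV \<noteq> 0"
  shows "cutK (Kmat w) S = Qmod w S"
proof -
  define V where "V = vol w UNIV"
  have h1: "\<And>i. (\<Sum>j\<in>-S. w i j) = deg w i - (\<Sum>j\<in>S. w i j)"
    unfolding deg_def using sum_split_compl[of "w _" S] by simp
  have h2: "vol w (-S) = V - vol w S"
    unfolding vol_def V_def using sum_split_compl[of "deg w" S] by simp
  have "cutK (Kmat w) S = (\<Sum>i\<in>S. deg w i * vol w (-S) / V - (\<Sum>j\<in>-S. w i j))"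
    unfolding cutK_def Kmat_def V_def vol_def
    by (simp add: sum_subtractf sum_divide_distrib sum_distrib_left)
  also have "\<dots> = (\<Sum>i\<in>S. deg w i * (V - vol w S) / V - deg w i + (\<Sum>j\<in>S. w i j))"
    by (simp add: h1 h2 algebra_simps)
  also have "\<dots> = vol w S * (V - vol w S) / V - vol w S + (\<Sum>i\<in>S. \<Sum>j\<in>S. w i j)"
    unfolding vol_def by (simp add: sum.distrib sum_subtractf sum_divide_distrib sum_distrib_right)
  also have "\<dots> = Qmod w S"
    unfolding Qmod_def V_def using assms by (simp add: field_simps power2_eq_square)
  finally show ?thesis .
qed


lemma half_lin: "(L::real) = P + c * Q \<Longrightarrow> 1/2 * L = 1/2 * P + c * (1/2 * Q)"
  by (simp add: algebra_simps)

lemma fK_bound: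
  fixes K :: "'v::finite \<Rightarrow> 'v \<Rightarrow> real"
  assumes symK: "\<And>i j. K i j = K j i" and cutM: "\<And>S. cutK K S \<le> M" and M0: "0 \<le> M"
  shows "card (range x) = n \<Longrightarrow> fK K x \<le> (Max (range x) - Min (range x)) * M"
proof (induction n arbitrary: x rule: less_induct)
  case (less n x)
  define R where "R = range x"
  have finR: "finite R" and neR: "R \<noteq> {}" unfolding R_def by auto
  define a where "a = Min R"
  have aR: "a \<in> R" unfolding a_def using finR neR by simp
  have ale: "\<And>i. a \<le> x i" unfolding a_def R_def by simp
  have MM: "Min R \<le> Max R" using finR neR by simp
  show ?case
  proof (cases "card R \<le> 1")
    case True
    then have eq: "\<And>i j. x i = x j" using card_le_Suc0_iff_eq[OF finR] unfolding R_def by auto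
    have z: "\<And>i j. \<bar>x i - x j\<bar> = 0" using eq by (metis abs_zero diff_self)
    have "fK K x = 0" unfolding fK_def z by simp
    then show ?thesis using MM M0 unfolding R_def by simp
  next
    case False
    define R' where "R' = R - {a}"
    have finR': "finite R'" unfolding R'_def using finR by simp
    have neR': "R' \<noteq> {}"
    proof
      assume "R' = {}"
      then have "R \<subseteq> {a}" unfolding R'_def by auto
      then have "card R \<le> 1" using card_mono[of "{a}" R] by simp
      then show False using False by simp
    qed
    define b where "b = Min R'"
    have bR': "b \<in> R'" unfolding b_def using finR' neR' by simp
    have bR: "b \<in> R" "b \<noteq> a" using bR' unfolding R'_def by auto
    have "a \<le> b" using finR bR(1) unfolding a_def by simp
    then have ab: "a < b" using bR(2) by simp
    have bge: "\<And>i. x i \<noteq> a \<Longrightarrow> b \<le> x i" unfolding b_def R'_def R_def using finR'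
      by (simp add: R'_def R_def)
    define S where "S = {i. x i = a}"
    define y where "y = (\<lambda>i. if x i = a then b else x i)"
    have ry: "range y = R'"
    proof
      show "range y \<subseteq> R'" using bR' unfolding y_def R'_def R_def by auto
      show "R' \<subseteq> range y"
      proof
        fix t assume "t \<in> R'"
        then obtain i where "x i = t" "t \<noteq> a" unfolding R'_def R_def by auto
        then have "y i = t" unfolding y_def by simp
        then show "t \<in> range y" by blast
      qed
    qed
    have cR': "card R' < n" unfolding R'_def using less.prems aR finR R_def
      by (metis card_Diff1_less)
    have IH: "fK K y \<le> (Max R' - Min R') * M" using less.IH[OF cR', of y] unfolding ry by simp
    have MaxR: "Max R' = Max R"
    proof -
      have "Max R \<in> R" using finR neR by simp
      moreover have "Max R \<ge> b" using bR' finR unfolding R'_def by simp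
      ultimately have "Max R \<in> R'" using ab unfolding R'_def by auto
      then have "Max R \<le> Max R'" using finR' by simp
      moreover have "Max R' \<le> Max R" using finR neR' unfolding R'_def
        by (simp add: Max_mono)
      ultimately show ?thesis by simp
    qed
    have pair: "\<And>i j. \<bar>x i - x j\<bar> = \<bar>y i - y j\<bar> + (b-a) * (if (i\<in>S) = (j\<in>S) then 0 else 1)"
    proof -
      fix i j
      show "\<bar>x i - x j\<bar> = \<bar>y i - y j\<bar> + (b-a) * (if (i\<in>S) = (j\<in>S) then 0 else 1)"
        using bge[of i] bge[of j] ab unfolding y_def S_def by auto
    qed
    have "fK K x = fK K y + (b - a) * (1/2 * (\<Sum>i\<in>UNIV. \<Sum>j\<in>UNIV. K i j * (if (i\<in>S) = (j\<in>S) then 0 else 1)))"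
    proof -
      define c where "c = b - a"
      have "(\<Sum>i\<in>UNIV. \<Sum>j\<in>UNIV. K i j * (\<bar>y i - y j\<bar> + c * (if (i\<in>S) = (j\<in>S) then 0 else 1)))
          = (\<Sum>i\<in>UNIV. \<Sum>j\<in>UNIV. K i j * \<bar>y i - y j\<bar>) + c * (\<Sum>i\<in>UNIV. \<Sum>j\<in>UNIV. K i j * (if (i\<in>S) = (j\<in>S) then 0 else 1))"
        by (simp add: distrib_left sum.distrib sum_distrib_left mult.left_commute)
      note aux = half_lin[OF this]
      show ?thesis unfolding fK_def pair c_def[symmetric] by (rule aux)
    qed
    also have "\<dots> = fK K y + (b - a) * cutK K S" using xor_sum[of K S] symK by simp
    also have "\<dots> \<le> (Max R - b) * M + (b - a) * M"
    proof -
      have "(b - a) * cutK K S \<le> (b - a) * M" using cutM[of S] ab by (simp add: mult_left_mono)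
      moreover have "fK K y \<le> (Max R - b) * M" using IH MaxR unfolding b_def by simp
      ultimately show ?thesis by linarith
    qed
    also have "\<dots> = (Max R - Min R) * M" unfolding a_def by (simp add: algebra_simps)
    finally show ?thesis unfolding R_def .
  qed
qed


lemma linf_ge: "\<bar>x i\<bar> \<le> linf x"
  unfolding linf_def by (rule Max_ge) auto

lemma range_le_linf: "Max (range x) - Min (range x) \<le> 2 * linf (x::'v::finite \<Rightarrow> real)"
proof -
  have "Max (range x) \<in> range x" by (rule Max_in) auto
  then obtain i where i: "Max (range x) = x i" by blast
  have "Min (range x) \<in> range x" by (rule Min_in) auto
  then obtain j where j: "Min (range x) = x j" by blast
  show ?thesis using i j linf_ge[of x i] linf_ge[of x j] by linarith
qed

lemma linf_pos: "x \<noteq> (\<lambda>_. 0) \<Longrightarrow> linf (x::'v::finite \<Rightarrow> real) > 0"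
proof -
  assume "x \<noteq> (\<lambda>_. 0)"
  then obtain i where "x i \<noteq> 0" by auto
  then show ?thesis using linf_ge[of x i] by linarith
qed

theorem theorem3p7:
  fixes w :: "'v::finite \<Rightarrow> 'v \<Rightarrow> real" and mu :: "'v \<Rightarrow> real"
  assumes sym: "\<And>i j. w i j = w j i"
    and nonneg: "\<And>i j. w i j \<ge> 0"
    and volpos: "vol w UNIV > 0"
    and mupos: "\<And>i. mu i > 0"
  shows "(\<forall>A. rstar w (\<lambda>i. indicator A i - indicator (- A) i) = qmod w mu A * meas mu UNIV)
    \<and> (\<exists>x. x \<noteq> (\<lambda>_. 0) \<and> rstar w x = lambda1 w)
    \<and> (\<forall>x. x \<noteq> (\<lambda>_. 0) \<longrightarrow> rstar w x \<le> lambda1 w)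
    \<and> qG w mu = Max {qmod w mu A | A. A \<subseteq> UNIV}
    \<and> qG w mu = lambda1 w / meas mu UNIV"
proof -
  have measpos: "meas mu UNIV > 0" unfolding meas_def
    by (rule sum_pos) (auto simp: mupos)
  have symK: "\<And>i j. Kmat w i j = Kmat w j i" unfolding Kmat_def using sym by (simp add: mult.commute)
  have mp: "\<And>x. modpair w x = fK (Kmat w) x" unfolding modpair_def fK_def Kmat_def by simp
  have cQ: "cutK (Kmat w) S = Qmod w S" for S using cutK_Q[of w S] volpos by simp
  obtain A0 where A0: "\<And>A. Qmod w A \<le> Qmod w A0"
  proof -
    have "Max (range (Qmod w)) \<in> range (Qmod w)" by (rule Max_in) auto
    then obtain A0 where "Max (range (Qmod w)) = Qmod w A0" by blast
    moreover have "\<And>A. Qmod w A \<le> Max (range (Qmod w))" by (rule Max_ge) auto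
    ultimately show ?thesis using that by metis
  qed
  define M where "M = Qmod w A0"
  have M0: "0 \<le> M" using A0[of "{}"] unfolding M_def Qmod_def vol_def by simp
  have bound: "\<And>x. x \<noteq> (\<lambda>_. 0) \<Longrightarrow> rstar w x \<le> 2 * M"
  proof -
    fix x :: "'v \<Rightarrow> real" assume x0: "x \<noteq> (\<lambda>_. 0)"
    have "fK (Kmat w) x \<le> (Max (range x) - Min (range x)) * M"
      by (rule fK_bound[OF symK _ M0]) (auto simp: cQ A0 M_def)
    also have "\<dots> \<le> 2 * linf x * M" using range_le_linf[of x] M0 by (simp add: mult_right_mono)
    finally have "modpair w x \<le> (2 * M) * linf x" using mp by (simp add: algebra_simps)
    then show "rstar w x \<le> 2 * M" unfolding rstar_def using linf_pos[OF x0]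
      by (simp add: divide_le_eq)
  qed
  have part1: "\<And>A. rstar w (\<lambda>i. indicator A i - indicator (- A) i) = 2 * Qmod w A"
  proof -
    fix A :: "'v set"
    define x where "x = (\<lambda>i. indicator A i - indicator (- A) i :: real)"
    have d: "\<And>i j. \<bar>x i - x j\<bar> = 2 * (if (i\<in>A) = (j\<in>A) then 0 else 1)"
      unfolding x_def by (auto simp: indicator_def)
    have "range (\<lambda>i. \<bar>x i\<bar>) = {1}" unfolding x_def by (auto simp: indicator_def)
    then have l: "linf x = 1" unfolding linf_def by simp
    have "modpair w x = (\<Sum>i\<in>UNIV. \<Sum>j\<in>UNIV. Kmat w i j * (if (i\<in>A) = (j\<in>A) then 0 else 1))"
      unfolding mp fK_def d by (simp add: sum_distrib_left mult.left_commute)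
    also have "\<dots> = 2 * Qmod w A" using xor_sum[of "Kmat w" A] symK cQ by simp
    finally show "rstar w (\<lambda>i. indicator A i - indicator (- A) i) = 2 * Qmod w A"
      unfolding rstar_def l x_def[symmetric] by simp
  qed
  have qm: "\<And>A. qmod w mu A * meas mu UNIV = 2 * Qmod w A"
    unfolding qmod_def using measpos by simp
  define x0 where "x0 = (\<lambda>i. indicator A0 i - indicator (- A0) i :: real)"
  have x0nz: "x0 \<noteq> (\<lambda>_. 0)"
  proof
    assume "x0 = (\<lambda>_. 0)"
    then have "x0 undefined = 0" by simp
    then show False unfolding x0_def by (cases "undefined \<in> A0") (auto simp: indicator_def)
  qed
  have r0: "rstar w x0 = 2 * M" unfolding x0_def M_def by (rule part1)
  have lam: "lambda1 w = 2 * M"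
    unfolding lambda1_def
  proof (rule cSup_eq_maximum)
    show "2 * M \<in> rstar w ` {x. x \<noteq> (\<lambda>_. 0)}"
      by (rule image_eqI[where x=x0 and f="rstar w"]) (simp_all add: x0nz r0)
    show "\<And>y. y \<in> rstar w ` {x. x \<noteq> (\<lambda>_. 0)} \<Longrightarrow> y \<le> 2 * M" using bound by auto
  qed
  have qGe: "qG w mu = qmod w mu A0"
    unfolding qG_def
  proof (rule Max_eqI)
    have "{qmod w mu A | A. A \<subseteq> UNIV} = range (qmod w mu)" by auto
    then show "finite {qmod w mu A | A. A \<subseteq> UNIV}" by simp
    show "qmod w mu A0 \<in> {qmod w mu A | A. A \<subseteq> UNIV}" by auto
    fix y assume "y \<in> {qmod w mu A | A. A \<subseteq> UNIV}"
    then obtain A where "y = qmod w mu A" by auto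
    then show "y \<le> qmod w mu A0" unfolding qmod_def using measpos A0[of A]
      by (simp add: divide_right_mono)
  qed
  have last: "qG w mu = lambda1 w / meas mu UNIV"
    unfolding qGe lam M_def qmod_def using measpos by simp
  show ?thesis
  proof (intro conjI allI impI)
    show "\<And>A. rstar w (\<lambda>i. indicator A i - indicator (- A) i) = qmod w mu A * meas mu UNIV"
      using part1 qm by simp
    show "\<exists>x. x \<noteq> (\<lambda>_. 0) \<and> rstar w x = lambda1 w"
      using x0nz r0 lam by metis
    show "\<And>x. x \<noteq> (\<lambda>_. 0) \<Longrightarrow> rstar w x \<le> lambda1 w" using bound lam by simp
    show "qG w mu = Max {qmod w mu A | A. A \<subseteq> UNIV}" unfolding qG_def ..
    show "qG w mu = lambda1 w / meas mu UNIV" by (rule last)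
  qed
qed

end
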